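(* Let $\Gamma^\infty$ be the infinite-horizon finite-action trading game described below, $m\ge1$, and $\epsilon\ge0$. If an assessment $(h^*,\mathscr B)\in\mathcal A(m)$ is an $\epsilon$-Perfect Bayesian equilibrium of the truncated game $\Gamma(m)$, then $(h^*,\mathscr B)$ is an $(\epsilon+w^m)$-Perfect Bayesian equilibrium of $\Gamma^\infty$.
   Context: $\Gamma^\infty$: finite state space $\Omega$, traders $I=\{1,\dots,n\}$ with partitions $\Pi_i$, security $X$, full-support common prior $\mu$, continuous strictly proper scoring rule $s$, $\beta\in(0,1)$, marginal cost $c>0$, cost function $K\ge0$; a finite set $\mathcal Y\subseteq[\min X,\max X]$ of announcements containing $y_0$ and a finite set $\mathcal E$ of signals with finitely many realizations. At $t_0$ nature draws $\omega^*\sim\mu$, the market maker announces $y_0$; at $t_k$ ($k\ge1$) trader $((k-1)\bmod n)+1$ privately picks a signal and, for each realization, an announcement in $\mathcal Y$; the realized announcement $y_k$ is public. The null action repeats the previous announcement and buys no signal. Payoff at $t_k$: $\beta^k(s(y_k,X(\omega^* ))-s(y_{k-1},X(\omega^* ))-cK(\mathcal R))$; payoffs summed over one's moves. An assessment $(\sigma,\mathscr B)$ consists of a behavior strategy profile and beliefs (over the full uncertainty) at every information set; it is consistent if beliefs follow from $\mu,\sigma$ by Bayes' rule whenever possible. $V_i(\mathcal I,\sigma,\mathscr B)$ denotes trader $i$'s continuation payoff at information set $\mathcal I$ under $\sigma$ with beliefs from $\mathscr B$. A consistent assessment $(\sigma^*,\mathscr B)$ is an $\epsilon$-Perfect Bayesian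 equilibrium if there is no information set $\mathcal I$ with mover $i$ and strategy $\sigma_i$ with $V_i(\mathcal I,(\sigma_i,\sigma^*_{-i}),\mathscr B)>V_i(\mathcal I,\sigma^*,\mathscr B)+\epsilon$ (deviations ranging over the strategies of the game in question). Truncated game $\Gamma(m)$: same as $\Gamma^\infty$ except that at all times $t_k$ with $k>m$ the only available action is the null action. $\Sigma(m)$ denotes its strategy profiles. $\mathcal A(m)$ is the set of assessments $(h,\mathscr B)$ with $h\in\Sigma(m)$ whose beliefs do not update after $t_m$ (if $k>m$ and $\mathcal I_{k-1}$ immediately precedes $\mathcal I_k$ then $\mathscr B(\mathcal I_k)=\mathscr B(\mathcal I_{k-1})$). Let $w^m=\sup_{\mathcal I,\mathscr B}\sup_{i,\ \sigma=_{m-1}\tau}|V_i(\mathcal I,\sigma,\mathscr B)-V_i(\mathcal I,\tau,\mathscr B)|$, where $\sigma=_{m-1}\tau$ means the profiles coincide at all information sets up to time $t_{m-1}$ and the supremum ranges over all information sets and all belief systems of $\Gamma^\infty$. *)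

theory Defs
  imports "HOL-Probability.Probability"
begin

text \<open>Traders are 1..ntr.  A signal is a function from states to realizations
  (type 'r); the set of available signals is sigs.\<close>

record ('w, 'r) mkt =
  ntr   :: nat
  part  :: "nat \<Rightarrow> 'w \<Rightarrow> 'w set"   \<comment> \<open>cell of trader i's partition containing the state\<close>
  sec   :: "'w \<Rightarrow> real"
  prior :: "'w pmf"
  score :: "real \<Rightarrow> real \<Rightarrow> real"
  disc  :: real
  mc    :: real
  kost  :: "('w \<Rightarrow> 'r) \<Rightarrow> real"
  anns  :: "real set"
  y0    :: real
  sigs  :: "('w \<Rightarrow> 'r) set"

definition xmin :: "('w::finite, 'r) mkt \<Rightarrow> real" where
  "xmin M = Min (range (sec M))"
definition xmax :: "('w::finite, 'r) mkt \<Rightarrow> real" where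
  "xmax M = Max (range (sec M))"

definition strictly_proper :: "(real \<Rightarrow> real \<Rightarrow> real) \<Rightarrow> real \<Rightarrow> real \<Rightarrow> bool" where
  "strictly_proper s a b \<longleftrightarrow>
     (\<forall>p :: real pmf. finite (set_pmf p) \<and> set_pmf p \<subseteq> {a..b} \<longrightarrow>
        (\<forall>y\<in>{a..b}. y \<noteq> measure_pmf.expectation p (\<lambda>x. x) \<longrightarrow>
           measure_pmf.expectation p (\<lambda>x. s y x)
             < measure_pmf.expectation p (\<lambda>x. s (measure_pmf.expectation p (\<lambda>x. x)) x)))"

definition continuous_score :: "(real \<Rightarrow> real \<Rightarrow> real) \<Rightarrow> real \<Rightarrow> real \<Rightarrow> bool" where
  "continuous_score s a b \<longleftrightarrow> (\<forall>x\<in>{a..b}. continuous_on {a..b} (\<lambda>y. s y x))"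

definition is_partition_fun :: "('w \<Rightarrow> 'w set) \<Rightarrow> bool" where
  "is_partition_fun P \<longleftrightarrow> (\<forall>w. w \<in> P w) \<and> (\<forall>w w'. w' \<in> P w \<longrightarrow> P w' = P w)"

definition market_ok :: "('w::finite, 'r) mkt \<Rightarrow> bool" where
  "market_ok M \<longleftrightarrow>
     ntr M \<ge> 1 \<and>
     (\<forall>i\<in>{1..ntr M}. is_partition_fun (part M i)) \<and>
     set_pmf (prior M) = UNIV \<and>
     strictly_proper (score M) (xmin M) (xmax M) \<and>
     continuous_score (score M) (xmin M) (xmax M) \<and>
     0 < disc M \<and> disc M < 1 \<and>
     0 < mc M \<and>
     (\<forall>e\<in>sigs M. 0 \<le> kost M e) \<and>
     finite (anns M) \<and> anns M \<subseteq> {xmin M..xmax M} \<and> y0 M \<in> anns M \<and>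
     finite (sigs M)"

text \<open>Actions: the null action, or a signal together with an announcement
  for each realization.\<close>
datatype ('w, 'r) act = Null | Act "'w \<Rightarrow> 'r" "'r \<Rightarrow> real"

type_synonym ('w, 'r) hist = "'w \<times> ('w, 'r) act list"
  \<comment> \<open>true state and the actions taken at t_1, ..., t_k\<close>

type_synonym ('w, 'r) view = "'w set \<times> real list \<times> (('w, 'r) act \<times> 'r option) list"
  \<comment> \<open>own partition cell, public announcements y_0..y_k, own moves with realizations\<close>

definition mover :: "nat \<Rightarrow> nat \<Rightarrow> nat" where
  "mover n k = ((k - 1) mod n) + 1"

text \<open>Announcement y_j after the actions as (j \<le> length as).\<close>
fun ann :: "real \<Rightarrow> 'w \<Rightarrow> ('w, 'r) act list \<Rightarrow> nat \<Rightarrow> real" where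
  "ann y w as 0 = y"
| "ann y w as (Suc j) =
     (case as ! j of Null \<Rightarrow> ann y w as j | Act e f \<Rightarrow> f (e w))"

definition realization :: "'w \<Rightarrow> ('w, 'r) act \<Rightarrow> 'r option" where
  "realization w a = (case a of Null \<Rightarrow> None | Act e f \<Rightarrow> Some (e w))"

definition act_cost :: "('w, 'r) mkt \<Rightarrow> ('w, 'r) act \<Rightarrow> real" where
  "act_cost M a = (case a of Null \<Rightarrow> 0 | Act e f \<Rightarrow> kost M e)"

text \<open>Payoff earned by the mover at t_j (j \<ge> 1) along history h.\<close>
definition payoff :: "('w, 'r) mkt \<Rightarrow> ('w, 'r) hist \<Rightarrow> nat \<Rightarrow> real" where
  "payoff M h j =
     disc M ^ j * (score M (ann (y0 M) (fst h) (snd h) j) (sec M (fst h))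
                   - score M (ann (y0 M) (fst h) (snd h) (j - 1)) (sec M (fst h))
                   - mc M * act_cost M (snd h ! (j - 1)))"

definition view :: "('w, 'r) mkt \<Rightarrow> nat \<Rightarrow> ('w, 'r) hist \<Rightarrow> ('w, 'r) view" where
  "view M i h =
     (part M i (fst h),
      map (ann (y0 M) (fst h) (snd h)) [0..<Suc (length (snd h))],
      map (\<lambda>j. (snd h ! (j - 1), realization (fst h) (snd h ! (j - 1))))
          (filter (\<lambda>j. mover (ntr M) j = i) [1..<Suc (length (snd h))]))"

text \<open>Number of the move decided at an information set with view v
  (the view records y_0..y_{k-1}, so the next move is t_k).\<close>
definition movetime :: "('w, 'r) view \<Rightarrow> nat" where
  "movetime v = length (fst (snd v))"

definition vtime :: "('w, 'r) view \<Rightarrow> nat" where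
  "vtime v = movetime v - 1"

text \<open>Horizon T: T = \<infinity> is the game Gamma-infinity, T = m the truncated game
  Gamma(m).  Legal actions at t_k.\<close>
definition legal :: "('w, 'r) mkt \<Rightarrow> enat \<Rightarrow> nat \<Rightarrow> ('w, 'r) act \<Rightarrow> bool" where
  "legal M T k a \<longleftrightarrow> a = Null \<or>
     (enat k \<le> T \<and> (\<exists>e f. a = Act e f \<and> e \<in> sigs M \<and> (\<forall>w. f (e w) \<in> anns M)))"

definition nodes :: "('w, 'r) mkt \<Rightarrow> enat \<Rightarrow> ('w, 'r) hist set" where
  "nodes M T = {h. \<forall>j < length (snd h). legal M T (Suc j) (snd h ! j)}"

definition infoset :: "('w, 'r) mkt \<Rightarrow> enat \<Rightarrow> nat \<Rightarrow> ('w, 'r) view \<Rightarrow> ('w, 'r) hist set" where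
  "infoset M T i v = {h \<in> nodes M T. view M i h = v}"

definition is_infoset :: "('w, 'r) mkt \<Rightarrow> enat \<Rightarrow> nat \<Rightarrow> ('w, 'r) view \<Rightarrow> bool" where
  "is_infoset M T i v \<longleftrightarrow> infoset M T i v \<noteq> {}"

definition move_infoset :: "('w, 'r) mkt \<Rightarrow> enat \<Rightarrow> nat \<Rightarrow> ('w, 'r) view \<Rightarrow> bool" where
  "move_infoset M T i v \<longleftrightarrow> is_infoset M T i v \<and> mover (ntr M) (movetime v) = i"

type_synonym ('w, 'r) bstrat = "('w, 'r) view \<Rightarrow> ('w, 'r) act pmf"
type_synonym ('w, 'r) profile = "nat \<Rightarrow> ('w, 'r) bstrat"
type_synonym ('w, 'r) beliefs = "nat \<Rightarrow> ('w, 'r) view \<Rightarrow> ('w, 'r) hist pmf"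

definition strat_ok :: "('w, 'r) mkt \<Rightarrow> enat \<Rightarrow> ('w, 'r) bstrat \<Rightarrow> bool" where
  "strat_ok M T si \<longleftrightarrow> (\<forall>v. \<forall>a\<in>set_pmf (si v). legal M T (movetime v) a)"

definition profile_ok :: "('w, 'r) mkt \<Rightarrow> enat \<Rightarrow> ('w, 'r) profile \<Rightarrow> bool" where
  "profile_ok M T \<sigma> \<longleftrightarrow> (\<forall>i\<in>{1..ntr M}. strat_ok M T (\<sigma> i))"

definition belief_system :: "('w, 'r) mkt \<Rightarrow> enat \<Rightarrow> ('w, 'r) beliefs \<Rightarrow> bool" where
  "belief_system M T B \<longleftrightarrow>
     (\<forall>i\<in>{1..ntr M}. \<forall>v. is_infoset M T i v \<longrightarrow> set_pmf (B i v) \<subseteq> infoset M T i v)"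

definition step :: "('w, 'r) mkt \<Rightarrow> ('w, 'r) profile \<Rightarrow> ('w, 'r) hist \<Rightarrow> ('w, 'r) hist pmf" where
  "step M \<sigma> h =
     (let i = mover (ntr M) (Suc (length (snd h)))
      in map_pmf (\<lambda>a. (fst h, snd h @ [a])) (\<sigma> i (view M i h)))"

fun dist :: "('w, 'r) mkt \<Rightarrow> ('w, 'r) profile \<Rightarrow> ('w, 'r) hist pmf \<Rightarrow> nat \<Rightarrow> ('w, 'r) hist pmf" where
  "dist M \<sigma> D 0 = D"
| "dist M \<sigma> D (Suc t) = bind_pmf (dist M \<sigma> D t) (step M \<sigma>)"

definition root :: "('w, 'r) mkt \<Rightarrow> ('w, 'r) hist pmf" where
  "root M = map_pmf (\<lambda>w. (w, [])) (prior M)"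

text \<open>Expected discounted payoff of trader i from the moves after time k,
  when the history after k moves is distributed as D and play follows sigma.\<close>
definition cont_value :: "('w, 'r) mkt \<Rightarrow> nat \<Rightarrow> ('w, 'r) profile \<Rightarrow> ('w, 'r) hist pmf \<Rightarrow> nat \<Rightarrow> real" where
  "cont_value M i \<sigma> D k =
     (\<Sum>j. if k < j \<and> mover (ntr M) j = i
          then measure_pmf.expectation (dist M \<sigma> D (j - k)) (\<lambda>h. payoff M h j) else 0)"

text \<open>V_i(I, sigma, B), where the information set I is given by its owner j
  and view v.\<close>
definition V :: "('w, 'r) mkt \<Rightarrow> nat \<Rightarrow> nat \<Rightarrow> ('w, 'r) view \<Rightarrow> ('w, 'r) profile \<Rightarrow> ('w, 'r) beliefs \<Rightarrow> real" where
  "V M i j v \<sigma> B = cont_value M i \<sigma> (B j v) (vtime v)"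

definition consistent :: "('w, 'r) mkt \<Rightarrow> enat \<Rightarrow> ('w, 'r) profile \<Rightarrow> ('w, 'r) beliefs \<Rightarrow> bool" where
  "consistent M T \<sigma> B \<longleftrightarrow>
     profile_ok M T \<sigma> \<and> belief_system M T B \<and>
     (\<forall>i\<in>{1..ntr M}. \<forall>v. is_infoset M T i v \<longrightarrow>
        measure_pmf.prob (dist M \<sigma> (root M) (vtime v)) {h. view M i h = v} > 0 \<longrightarrow>
        B i v = cond_pmf (dist M \<sigma> (root M) (vtime v)) {h. view M i h = v})"

definition eps_PBE :: "('w, 'r) mkt \<Rightarrow> enat \<Rightarrow> real \<Rightarrow> ('w, 'r) profile \<Rightarrow> ('w, 'r) beliefs \<Rightarrow> bool" where
  "eps_PBE M T \<epsilon> \<sigma> B \<longleftrightarrow>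
     consistent M T \<sigma> B \<and>
     (\<forall>i\<in>{1..ntr M}. \<forall>v. move_infoset M T i v \<longrightarrow>
        (\<forall>si. strat_ok M T si \<longrightarrow> V M i i v (\<sigma>(i := si)) B \<le> V M i i v \<sigma> B + \<epsilon>))"

text \<open>Beliefs do not update after t_m (in the truncated game Gamma(m)): a
  trader's belief after k > m moves equals his belief after k - 1 moves
  (the only possible move at t_k being the null action).\<close>
definition no_update :: "('w, 'r) mkt \<Rightarrow> nat \<Rightarrow> ('w, 'r) beliefs \<Rightarrow> bool" where
  "no_update M m B \<longleftrightarrow>
     (\<forall>i\<in>{1..ntr M}. \<forall>h\<in>nodes M (enat m). m \<le> length (snd h) \<longrightarrow>
        B i (view M i (fst h, snd h @ [Null]))
          = map_pmf (\<lambda>g. (fst g, snd g @ [Null])) (B i (view M i h)))"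

definition A_set :: "('w, 'r) mkt \<Rightarrow> nat \<Rightarrow> (('w, 'r) profile \<times> ('w, 'r) beliefs) set" where
  "A_set M m = {(h, B). profile_ok M (enat m) h \<and> belief_system M \<infinity> B \<and> no_update M m B}"

definition agree_upto :: "('w, 'r) mkt \<Rightarrow> nat \<Rightarrow> ('w, 'r) profile \<Rightarrow> ('w, 'r) profile \<Rightarrow> bool" where
  "agree_upto M m' \<sigma> \<tau> \<longleftrightarrow>
     (\<forall>j\<in>{1..ntr M}. \<forall>v. move_infoset M \<infinity> j v \<and> movetime v \<le> m' \<longrightarrow> \<sigma> j v = \<tau> j v)"

definition w_bound :: "('w, 'r) mkt \<Rightarrow> nat \<Rightarrow> real" where
  "w_bound M m = Sup {\<bar>V M i j v \<sigma> B - V M i j v \<tau> B\<bar> | i j v \<sigma> \<tau> B.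
      i \<in> {1..ntr M} \<and> j \<in> {1..ntr M} \<and> move_infoset M \<infinity> j v \<and>
      belief_system M \<infinity> B \<and> profile_ok M \<infinity> \<sigma> \<and> profile_ok M \<infinity> \<tau> \<and>
      agree_upto M (m - 1) \<sigma> \<tau>}"

end

theory Submission
  imports Defs
begin


lemma mover_range: "1 \<le> n \<Longrightarrow> mover n k \<in> {1..n}"
  unfolding mover_def by (auto intro: Suc_leI)

lemma movetime_view: "movetime (view M i h) = Suc (length (snd h))"
  by (simp add: movetime_def view_def)

lemma dist_len:
  assumes "set_pmf D \<subseteq> {h. length (snd h) = t}"
  shows "set_pmf (dist M \<sigma> D n) \<subseteq> {h. length (snd h) = t + n}"
  using assms by (induction n) (auto simp: step_def Let_def)

lemma dist_nodes:
  assumes "ntr M \<ge> 1" "profile_ok M T \<sigma>" "set_pmf D \<subseteq> nodes M T"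
  shows "set_pmf (dist M \<sigma> D n) \<subseteq> nodes M T"
proof (induction n)
  case 0 then show ?case using assms by simp
next
  case (Suc n)
  show ?case
  proof
    fix g assume "g \<in> set_pmf (dist M \<sigma> D (Suc n))"
    then obtain h a where h: "h \<in> set_pmf (dist M \<sigma> D n)"
      and a: "a \<in> set_pmf (\<sigma> (mover (ntr M) (Suc (length (snd h)))) (view M (mover (ntr M) (Suc (length (snd h)))) h))"
      and g: "g = (fst h, snd h @ [a])"
      by (auto simp: step_def Let_def)
    have hn: "h \<in> nodes M T" using h Suc by auto
    have "strat_ok M T (\<sigma> (mover (ntr M) (Suc (length (snd h)))))"
      using assms(2) mover_range[OF assms(1)] by (auto simp: profile_ok_def)
    then have "\<forall>x\<in>set_pmf (\<sigma> (mover (ntr M) (Suc (length (snd h)))) (view M (mover (ntr M) (Suc (length (snd h)))) h)). legal M T (movetime (view M (mover (ntr M) (Suc (length (snd h)))) h)) x"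
      unfolding strat_ok_def by blast
    then have la: "legal M T (Suc (length (snd h))) a"
      using a by (simp add: movetime_view)
    show "g \<in> nodes M T"
      unfolding nodes_def g
    proof (clarsimp)
      fix j assume "j < Suc (length (snd h))"
      then show "legal M T (Suc j) ((snd h @ [a]) ! j)"
        using hn la by (cases "j < length (snd h)") (auto simp: nodes_def nth_append less_Suc_eq)
    qed
  qed
qed

lemma dist_local:
  assumes "set_pmf D \<subseteq> {h. length (snd h) = t}"
    and "\<And>j v. t < movetime v \<Longrightarrow> \<sigma> j v = \<tau> j v"
  shows "dist M \<sigma> D n = dist M \<tau> D n"
proof (induction n)
  case 0 then show ?case by simp
next
  case (Suc n)
  have "bind_pmf (dist M \<sigma> D n) (step M \<sigma>) = bind_pmf (dist M \<tau> D n) (step M \<tau>)"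
  proof (rule bind_pmf_cong)
    show "dist M \<sigma> D n = dist M \<tau> D n" by (rule Suc)
    fix h assume "h \<in> set_pmf (dist M \<tau> D n)"
    then have "length (snd h) = t + n" using dist_len[OF assms(1), of M \<tau> n] by auto
    then show "step M \<sigma> h = step M \<tau> h"
      using assms(2) by (simp add: step_def Let_def movetime_view)
  qed
  then show ?case by simp
qed

lemma cont_value_local:
  assumes "set_pmf D \<subseteq> {h. length (snd h) = t}"
    and "\<And>j v. t < movetime v \<Longrightarrow> \<sigma> j v = \<tau> j v"
  shows "cont_value M i \<sigma> D k = cont_value M i \<tau> D k"
proof -
  have eq: "\<And>n. dist M \<sigma> D n = dist M \<tau> D n"
    by (rule dist_local[OF assms(1)]) (rule assms(2))
  show ?thesis unfolding cont_value_def eq ..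
qed

lemma exp_bound:
  fixes f :: "'a \<Rightarrow> real"
  assumes "\<And>x. x \<in> set_pmf p \<Longrightarrow> \<bar>f x\<bar> \<le> c"
  shows "\<bar>measure_pmf.expectation p f\<bar> \<le> c"
proof -
  have ae: "AE x in measure_pmf p. \<bar>f x\<bar> \<le> c" using assms by (simp add: AE_measure_pmf_iff)
  have int: "integrable (measure_pmf p) f"
    by (rule measure_pmf.integrable_const_bound[where B=c]) (use ae in auto)
  have "measure_pmf.expectation p f \<le> measure_pmf.expectation p (\<lambda>_. c)"
    by (rule integral_mono_AE) (use int ae in auto)
  moreover have "measure_pmf.expectation p (\<lambda>_. -c) \<le> measure_pmf.expectation p f"
    by (rule integral_mono_AE) (use int ae in auto)
  ultimately show ?thesis by simp
qed

lemma ann_in: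
  assumes "h \<in> nodes M \<infinity>" "y0 M \<in> anns M"
  shows "j \<le> length (snd h) \<Longrightarrow> ann (y0 M) (fst h) (snd h) j \<in> anns M"
proof (induction j)
  case 0 then show ?case using assms by simp
next
  case (Suc j)
  then have "legal M \<infinity> (Suc j) (snd h ! j)" using assms(1) by (auto simp: nodes_def)
  then show ?case using Suc by (auto simp: legal_def split: act.splits)
qed



definition Sb :: "('w::finite, 'r) mkt \<Rightarrow> real" where
  "Sb M = Max ((\<lambda>(y, x). \<bar>score M y x\<bar>) ` (anns M \<times> range (sec M)))"
definition Kb :: "('w::finite, 'r) mkt \<Rightarrow> real" where
  "Kb M = Max (insert 0 ((\<lambda>e. \<bar>kost M e\<bar>) ` sigs M))"
definition Cb :: "('w::finite, 'r) mkt \<Rightarrow> real" where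
  "Cb M = 2 * Sb M + mc M * Kb M"

lemma Sb_ge:
  assumes "market_ok M" "y \<in> anns M"
  shows "\<bar>score M y (sec M w)\<bar> \<le> Sb M"
  unfolding Sb_def
  by (rule Max_ge) (use assms in \<open>auto simp: market_ok_def\<close>)

lemma Kb_ge:
  assumes "market_ok M" "e \<in> sigs M"
  shows "\<bar>kost M e\<bar> \<le> Kb M"
  unfolding Kb_def
  by (rule Max_ge) (use assms in \<open>auto simp: market_ok_def\<close>)

lemma Kb_nonneg: "market_ok M \<Longrightarrow> 0 \<le> Kb M"
  unfolding Kb_def by (rule Max_ge) (auto simp: market_ok_def)

lemma abs3:
  fixes a b c k :: real
  assumes "0 < c" shows "\<bar>a - b - c * k\<bar> \<le> \<bar>a\<bar> + \<bar>b\<bar> + c * \<bar>k\<bar>"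
proof -
  have e: "\<bar>c * k\<bar> = c * \<bar>k\<bar>" using assms by (simp add: abs_mult)
  show ?thesis using e abs_ge_self[of a] abs_ge_minus_self[of a] abs_ge_self[of b] abs_ge_minus_self[of b]
    abs_ge_self[of "c*k"] abs_ge_minus_self[of "c*k"] abs_ge_self[of "a - b - c * k"] abs_ge_minus_self[of "a - b - c * k"]
    by (simp add: abs_le_iff)
qed

lemma payoff_bound:
  assumes M: "market_ok M" and h: "h \<in> nodes M \<infinity>" and j: "1 \<le> j" "j \<le> length (snd h)"
  shows "\<bar>payoff M h j\<bar> \<le> disc M ^ j * Cb M"
proof -
  have y0: "y0 M \<in> anns M" using M by (simp add: market_ok_def)
  let ?a = "score M (ann (y0 M) (fst h) (snd h) j) (sec M (fst h))"
  let ?b = "score M (ann (y0 M) (fst h) (snd h) (j - 1)) (sec M (fst h))"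
  let ?k = "act_cost M (snd h ! (j - 1))"
  have a: "\<bar>?a\<bar> \<le> Sb M" using Sb_ge[OF M ann_in[OF h y0 j(2)]] .
  have b: "\<bar>?b\<bar> \<le> Sb M" using Sb_ge[OF M ann_in[OF h y0]] j by simp
  have jl: "j - 1 < length (snd h)" using j by simp
  have "\<forall>jj<length (snd h). legal M \<infinity> (Suc jj) (snd h ! jj)" using h by (simp add: nodes_def)
  then have "legal M \<infinity> (Suc (j - 1)) (snd h ! (j - 1))" using jl by blast
  then have k: "\<bar>?k\<bar> \<le> Kb M"
    using Kb_ge[OF M] Kb_nonneg[OF M] by (auto simp: legal_def act_cost_def)
  have c: "0 < mc M" "0 < disc M" using M by (auto simp: market_ok_def)
  have mk: "mc M * \<bar>?k\<bar> \<le> mc M * Kb M" using k c by (simp add: mult_left_mono)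
  have "\<bar>?a - ?b - mc M * ?k\<bar> \<le> \<bar>?a\<bar> + \<bar>?b\<bar> + mc M * \<bar>?k\<bar>"
    using abs3[OF c(1)] .
  also have "\<dots> \<le> Cb M" unfolding Cb_def using a b mk by linarith
  finally have "\<bar>?a - ?b - mc M * ?k\<bar> \<le> Cb M" .
  then show ?thesis
    unfolding payoff_def using c by (simp add: abs_mult mult_left_mono)
qed

lemma V_bound:
  assumes M: "market_ok M" and P: "profile_ok M \<infinity> \<sigma>" and BS: "belief_system M \<infinity> B"
    and j: "j \<in> {1..ntr M}" and I: "is_infoset M \<infinity> j v"
  shows "\<bar>V M i j v \<sigma> B\<bar> \<le> Cb M / (1 - disc M)"
proof -
  define t where "t = vtime v"
  define D where "D = B j v"
  have n1: "ntr M \<ge> 1" and b: "0 < disc M" "disc M < 1" using M by (auto simp: market_ok_def)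
  have sD: "set_pmf D \<subseteq> infoset M \<infinity> j v" using BS j I unfolding belief_system_def D_def by blast
  have sDn: "set_pmf D \<subseteq> nodes M \<infinity>" using sD by (auto simp: infoset_def)
  have sDl: "set_pmf D \<subseteq> {h. length (snd h) = t}"
    using sD by (auto simp: infoset_def t_def vtime_def movetime_view dest: sym)
  define g where "g n = (if t < n \<and> mover (ntr M) n = i
          then measure_pmf.expectation (dist M \<sigma> D (n - t)) (\<lambda>h. payoff M h n) else 0)" for n
  have gb: "\<bar>g n\<bar> \<le> Cb M * disc M ^ n" for n
  proof (cases "t < n \<and> mover (ntr M) n = i")
    case True
    have "\<bar>measure_pmf.expectation (dist M \<sigma> D (n - t)) (\<lambda>h. payoff M h n)\<bar> \<le> disc M ^ n * Cb M"
    proof (rule exp_bound)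
      fix h assume h: "h \<in> set_pmf (dist M \<sigma> D (n - t))"
      have "h \<in> nodes M \<infinity>" using dist_nodes[OF n1 P sDn] h by auto
      moreover have "length (snd h) = n" using dist_len[OF sDl] h True by fastforce
      ultimately show "\<bar>payoff M h n\<bar> \<le> disc M ^ n * Cb M"
        using payoff_bound[OF M] True by simp
    qed
    then show ?thesis using True by (simp add: g_def mult.commute)
  next
    case False
    have "0 \<le> Sb M" using Sb_ge[OF M, of "y0 M"] M unfolding market_ok_def
      by (meson abs_ge_zero order_trans)
    then have "0 \<le> Cb M" unfolding Cb_def using Kb_nonneg[OF M] M
      by (simp add: market_ok_def)
    moreover have "g n = 0" unfolding g_def by (rule if_not_P[OF False])
    ultimately show ?thesis using b by simp
  qed
  have sg: "summable (\<lambda>n. Cb M * disc M ^ n)" using b by (intro summable_mult summable_geometric) simp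
  have sumg: "summable g" by (rule summable_comparison_test[OF _ sg]) (use gb in auto)
  have s1: "suminf g \<le> (\<Sum>n. Cb M * disc M ^ n)"
    by (rule suminf_le[OF _ sumg sg]) (use gb in \<open>auto simp: abs_le_iff\<close>)
  have s2: "(\<Sum>n. - (Cb M * disc M ^ n)) \<le> suminf g"
  proof (rule suminf_le[OF _ summable_minus[OF sg] sumg])
    fix n show "- (Cb M * disc M ^ n) \<le> g n" using gb[of n] by (simp add: abs_le_iff)
  qed
  have eq: "(\<Sum>n. Cb M * disc M ^ n) = Cb M / (1 - disc M)"
    using b by (simp add: suminf_mult suminf_geometric summable_geometric divide_inverse)
  have eq2: "(\<Sum>n. - (Cb M * disc M ^ n)) = - (Cb M / (1 - disc M))"
    using suminf_minus[OF sg] eq by simp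
  have "V M i j v \<sigma> B = suminf g"
    unfolding V_def cont_value_def g_def t_def D_def ..
  then show ?thesis using s1 s2 eq eq2 by simp
qed



lemma w_ge:
  assumes M: "market_ok M" and i: "i \<in> {1..ntr M}" and j: "j \<in> {1..ntr M}"
    and I: "move_infoset M \<infinity> j v" and BS: "belief_system M \<infinity> B"
    and P1: "profile_ok M \<infinity> \<sigma>" and P2: "profile_ok M \<infinity> \<tau>"
    and A: "agree_upto M (m - 1) \<sigma> \<tau>"
  shows "\<bar>V M i j v \<sigma> B - V M i j v \<tau> B\<bar> \<le> w_bound M m"
  unfolding w_bound_def
proof (rule cSup_upper)
  show "\<bar>V M i j v \<sigma> B - V M i j v \<tau> B\<bar> \<in> {\<bar>V M i j v \<sigma> B - V M i j v \<tau> B\<bar> | i j v \<sigma> \<tau> B.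
      i \<in> {1..ntr M} \<and> j \<in> {1..ntr M} \<and> move_infoset M \<infinity> j v \<and>
      belief_system M \<infinity> B \<and> profile_ok M \<infinity> \<sigma> \<and> profile_ok M \<infinity> \<tau> \<and>
      agree_upto M (m - 1) \<sigma> \<tau>}"
    using assms by blast
  show "bdd_above {\<bar>V M i j v \<sigma> B - V M i j v \<tau> B\<bar> | i j v \<sigma> \<tau> B.
      i \<in> {1..ntr M} \<and> j \<in> {1..ntr M} \<and> move_infoset M \<infinity> j v \<and>
      belief_system M \<infinity> B \<and> profile_ok M \<infinity> \<sigma> \<and> profile_ok M \<infinity> \<tau> \<and>
      agree_upto M (m - 1) \<sigma> \<tau>}"
  proof (rule bdd_aboveI)
    fix x assume "x \<in> {\<bar>V M i j v \<sigma> B - V M i j v \<tau> B\<bar> | i j v \<sigma> \<tau> B.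
      i \<in> {1..ntr M} \<and> j \<in> {1..ntr M} \<and> move_infoset M \<infinity> j v \<and>
      belief_system M \<infinity> B \<and> profile_ok M \<infinity> \<sigma> \<and> profile_ok M \<infinity> \<tau> \<and>
      agree_upto M (m - 1) \<sigma> \<tau>}"
    then obtain i j v \<sigma> \<tau> B where x: "x = \<bar>V M i j v \<sigma> B - V M i j v \<tau> B\<bar>"
      and h: "j \<in> {1..ntr M}" "move_infoset M \<infinity> j v"
      "belief_system M \<infinity> B" "profile_ok M \<infinity> \<sigma>" "profile_ok M \<infinity> \<tau>" by blast
    have I': "is_infoset M \<infinity> j v" using h(2) by (simp add: move_infoset_def)
    have "\<bar>V M i j v \<sigma> B\<bar> \<le> Cb M / (1 - disc M)" by (rule V_bound[OF M h(4) h(3) h(1) I'])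
    moreover have "\<bar>V M i j v \<tau> B\<bar> \<le> Cb M / (1 - disc M)" by (rule V_bound[OF M h(5) h(3) h(1) I'])
    ultimately show "x \<le> 2 * (Cb M / (1 - disc M))" unfolding x by linarith
  qed
qed

lemma legal_mono: "legal M (enat m) k a \<Longrightarrow> legal M \<infinity> k a"
  by (auto simp: legal_def)

lemma legal_down: "k \<le> m \<Longrightarrow> legal M \<infinity> k a \<Longrightarrow> legal M (enat m) k a"
  by (auto simp: legal_def)

lemma profile_mono: "profile_ok M (enat m) \<sigma> \<Longrightarrow> profile_ok M \<infinity> \<sigma>"
  unfolding profile_ok_def strat_ok_def by (blast intro: legal_mono)

lemma legal_late: "m < k \<Longrightarrow> legal M (enat m) k a \<Longrightarrow> a = Null"
  by (auto simp: legal_def)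

theorem lemma1:
  fixes M :: "('w::finite, 'r) mkt"
    and m :: nat and \<epsilon> :: real
    and hs :: "('w, 'r) profile" and B :: "('w, 'r) beliefs"
  assumes "market_ok M"
    and "m \<ge> 1"
    and "\<epsilon> \<ge> 0"
    and "(hs, B) \<in> A_set M m"
    and "eps_PBE M (enat m) \<epsilon> hs B"
  shows "eps_PBE M \<infinity> (\<epsilon> + w_bound M m) hs B"
proof -
  note M = assms(1)
  have n1: "ntr M \<ge> 1" using M by (simp add: market_ok_def)
  have Pm: "profile_ok M (enat m) hs" and BS: "belief_system M \<infinity> B"
    using assms(4) by (auto simp: A_set_def)
  have Pi: "profile_ok M \<infinity> hs" using profile_mono[OF Pm] .
  have cm: "consistent M (enat m) hs B" and eq: "\<forall>i\<in>{1..ntr M}. \<forall>v. move_infoset M (enat m) i v \<longrightarrow>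
        (\<forall>si. strat_ok M (enat m) si \<longrightarrow> V M i i v (hs(i := si)) B \<le> V M i i v hs B + \<epsilon>)"
    using assms(5) by (auto simp: eps_PBE_def)
  have rootn: "set_pmf (root M) \<subseteq> nodes M (enat m)"
    by (auto simp: root_def nodes_def)
  have cons: "consistent M \<infinity> hs B"
    unfolding consistent_def
  proof (intro conjI Pi BS ballI allI impI)
    fix i v assume i: "i \<in> {1..ntr M}" and "is_infoset M \<infinity> i v"
      and pos: "measure_pmf.prob (dist M hs (root M) (vtime v)) {h. view M i h = v} > 0"
    then obtain h where h: "h \<in> set_pmf (dist M hs (root M) (vtime v))" "view M i h = v"
      using measure_pmf_zero_iff[of "dist M hs (root M) (vtime v)" "{h. view M i h = v}"] by auto
    have "h \<in> nodes M (enat m)" using dist_nodes[OF n1 Pm rootn] h(1) by auto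
    then have "h \<in> infoset M (enat m) i v" using h(2) by (simp add: infoset_def)
    then have "is_infoset M (enat m) i v" unfolding is_infoset_def by blast
    then show "B i v = cond_pmf (dist M hs (root M) (vtime v)) {h. view M i h = v}"
      using cm i pos unfolding consistent_def by blast
  qed
  show ?thesis
    unfolding eps_PBE_def
  proof (intro conjI cons ballI allI impI)
    fix i v si
    assume i: "i \<in> {1..ntr M}" and mi: "move_infoset M \<infinity> i v" and so: "strat_ok M \<infinity> si"
    define si' where "si' = (\<lambda>u. if movetime u \<le> m then si u else return_pmf (Null :: ('w,'r) act))"
    have so': "strat_ok M \<infinity> si'" using so by (auto simp: strat_ok_def si'_def legal_def)
    have som: "strat_ok M (enat m) si'" using so by (auto simp: strat_ok_def si'_def legal_down legal_def)
    have P1: "profile_ok M \<infinity> (hs(i := si))" using Pi so by (auto simp: profile_ok_def)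
    have P2: "profile_ok M \<infinity> (hs(i := si'))" using Pi so' by (auto simp: profile_ok_def)
    have ag: "agree_upto M (m - 1) (hs(i := si)) (hs(i := si'))"
      by (auto simp: agree_upto_def si'_def)
    have w1: "\<bar>V M i i v (hs(i := si)) B - V M i i v (hs(i := si')) B\<bar> \<le> w_bound M m"
      by (rule w_ge[OF M i i mi BS P1 P2 ag])
    have I: "is_infoset M \<infinity> i v" and mv: "mover (ntr M) (movetime v) = i"
      using mi by (auto simp: move_infoset_def)
    then obtain h0 where h0: "h0 \<in> infoset M \<infinity> i v" by (auto simp: is_infoset_def)
    have mt: "movetime v = Suc (length (snd h0))"
      using h0 by (auto simp: infoset_def movetime_view dest: sym)
    have w2: "V M i i v (hs(i := si')) B \<le> V M i i v hs B + \<epsilon>"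
    proof (cases "movetime v \<le> m")
      case True
      have "h0 \<in> nodes M (enat m)"
        using h0 True mt unfolding infoset_def nodes_def by (auto intro: legal_down)
      then have "h0 \<in> infoset M (enat m) i v" using h0 by (simp add: infoset_def)
      then have "move_infoset M (enat m) i v" using mv
        unfolding move_infoset_def is_infoset_def by blast
      then show ?thesis using eq i som by blast
    next
      case False
      have sD0: "set_pmf (B i v) \<subseteq> infoset M \<infinity> i v"
        using BS i I unfolding belief_system_def by blast
      have sD: "set_pmf (B i v) \<subseteq> {h. length (snd h) = vtime v}"
      proof
        fix h assume "h \<in> set_pmf (B i v)"
        then have "view M i h = v" using sD0 by (auto simp: infoset_def)
        then have "movetime v = Suc (length (snd h))" using movetime_view[of M i h] by simp
        then show "h \<in> {h. length (snd h) = vtime v}" by (simp add: vtime_def)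
      qed
      have "V M i i v (hs(i := si')) B = V M i i v hs B"
        unfolding V_def
      proof (rule cont_value_local[OF sD])
        fix j and u :: "('w, 'r) view" assume "vtime v < movetime u"
        then have mu: "m < movetime u" using False by (simp add: vtime_def)
        show "(hs(i := si')) j u = hs j u"
        proof (cases "j = i")
          case True
          have "strat_ok M (enat m) (hs i)" using Pm i by (simp add: profile_ok_def)
          then have "set_pmf (hs i u) \<subseteq> {Null}"
            using legal_late[OF mu] unfolding strat_ok_def by blast
          then have "hs i u = return_pmf Null" by (simp add: set_pmf_subset_singleton)
          then show ?thesis using True mu by (simp add: si'_def)
        qed simp
      qed
      then show ?thesis using assms(3) by simp
    qed
    show "V M i i v (hs(i := si)) B \<le> V M i i v hs B + (\<epsilon> + w_bound M m)"
      using w1 w2 by linarith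
  qed
qed

end
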